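(* Let $M$ be a finite set of alternatives, $\mathcal{R}$ the set of weak preference orders on $M$, and $\varphi:\mathcal{R}\to\Delta(M)$ a mechanism. If $\varphi$ is separation monotonic, separation upper invariant, and separation lower invariant, then it is multi-separation strategyproof, i.e., for every multi-separation $(R,R')$, $\varphi(R)$ first order-stochastically dominates $\varphi(R')$ at $R$, and $\varphi(R')$ first order-stochastically dominates $\varphi(R)$ at $R'$.
   Context: A preference order is a complete, transitive relation $R$ on $M$; $a\,I\,b$ means $a\,R\,b$ and $b\,R\,a$; $a\,P\,b$ means $a\,R\,b$ and not $b\,R\,a$. Write $R$ as $M_1\,P\,\cdots\,P\,M_K$ where $(M_k)$ are the nonempty indifference classes ordered so that $a\,P\,b$ for $a\in M_k$, $b\in M_{k'}$, $k<k'$. For $A\subseteq M$, $\varphi_A(R)=\sum_{a\in A}(\varphi(R))_a$. A lottery $x$ first order-stochastically dominates $y$ at $R$ if $\sum_{j: j R a}x_j\ge\sum_{j: j R a}y_j$ for all $a\in M$. A multi-separation is a pair $(R,R')$ such that, with $R=M_1\,P\,\cdots\,P\,M_K$, there are integers $L_1,\dots,L_K\ge1$ and, for each $k$, a partition of $M_k$ into pairwise disjoint nonempty sets $M_k^1,\dots,M_k^{L_k}$ with $R'=M_1^1\,P'\,\cdots\,P'\,M_1^{L_1}\,P'\,M_2^1\,P'\,\cdots\,P'\,M_K^1\,P'\,\cdots\,P'\,M_K^{L_K}$ (indifference within each listed set). A separation is a pair $(R,R')$ such that there are $\kappa\in\{1,\dots,K\}$ and a partition of $M_\kappa$ into disjoint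 nonempty $M_\kappa^1,M_\kappa^2$ with $R'=M_1\,P'\,\cdots\,P'\,M_{\kappa-1}\,P'\,M_\kappa^1\,P'\,M_\kappa^2\,P'\,M_{\kappa+1}\,P'\,\cdots\,P'\,M_K$. Axioms, for every separation $(R,R')$: separation responsive: $\varphi_{M_\kappa^1}(R')\ge\varphi_{M_\kappa^1}(R)$ and $\varphi_{M_\kappa^2}(R')\le\varphi_{M_\kappa^2}(R)$; separation direct: if $\varphi_{M_k}(R)\ne\varphi_{M_k}(R')$ for some $k\in\{1,\dots,K\}$ then $\varphi_{M_\kappa^1}(R')\ne\varphi_{M_\kappa^1}(R)$ and $\varphi_{M_\kappa^2}(R')\ne\varphi_{M_\kappa^2}(R)$; separation monotonic: responsive and direct; separation upper invariant: $\varphi_{M_k}(R)=\varphi_{M_k}(R')$ for $k<\kappa$; separation lower invariant: $\varphi_{M_k}(R)=\varphi_{M_k}(R')$ for $k>\kappa$. *)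

theory Defs
  imports Complex_Main
begin

definition weak_order :: "'a set \<Rightarrow> 'a rel \<Rightarrow> bool" where
  "weak_order M R \<longleftrightarrow> R \<subseteq> M \<times> M \<and>
     (\<forall>a\<in>M. \<forall>b\<in>M. (a, b) \<in> R \<or> (b, a) \<in> R) \<and> trans R"

definition ordered_partition :: "'a set \<Rightarrow> 'a set list \<Rightarrow> bool" where
  "ordered_partition M Ms \<longleftrightarrow>
     (\<forall>k<length Ms. Ms ! k \<noteq> {}) \<and>
     (\<forall>i<length Ms. \<forall>j<length Ms. i \<noteq> j \<longrightarrow> Ms ! i \<inter> Ms ! j = {}) \<and>
     \<Union>(set Ms) = M"

definition ord_rel :: "'a set list \<Rightarrow> 'a rel" where
  "ord_rel Ms = {(a, b). \<exists>i<length Ms. \<exists>j<length Ms. i \<le> j \<and> a \<in> Ms ! i \<and> b \<in> Ms ! j}"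

definition phi_set :: "('a rel \<Rightarrow> 'a \<Rightarrow> real) \<Rightarrow> 'a rel \<Rightarrow> 'a set \<Rightarrow> real" where
  "phi_set \<phi> R A = (\<Sum>a\<in>A. \<phi> R a)"

definition lottery :: "'a set \<Rightarrow> ('a \<Rightarrow> real) \<Rightarrow> bool" where
  "lottery M x \<longleftrightarrow> (\<forall>a\<in>M. x a \<ge> 0) \<and> (\<Sum>a\<in>M. x a) = 1"

definition fosd :: "'a set \<Rightarrow> 'a rel \<Rightarrow> ('a \<Rightarrow> real) \<Rightarrow> ('a \<Rightarrow> real) \<Rightarrow> bool" where
  "fosd M R x y \<longleftrightarrow>
     (\<forall>a\<in>M. (\<Sum>j\<in>{j\<in>M. (j, a) \<in> R}. x j) \<ge> (\<Sum>j\<in>{j\<in>M. (j, a) \<in> R}. y j))"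

definition multi_separation :: "'a set \<Rightarrow> 'a rel \<Rightarrow> 'a rel \<Rightarrow> bool" where
  "multi_separation M R R' \<longleftrightarrow>
     (\<exists>Ms Ls. ordered_partition M Ms \<and> R = ord_rel Ms \<and>
        length Ls = length Ms \<and>
        (\<forall>k<length Ms. ordered_partition (Ms ! k) (Ls ! k)) \<and>
        R' = ord_rel (concat Ls))"

text \<open>Separations: R = ord_rel Ms, class Ms!\<kappa> split into A (upper) and B (lower).\<close>
definition separation_data :: "'a set \<Rightarrow> 'a set list \<Rightarrow> nat \<Rightarrow> 'a set \<Rightarrow> 'a set \<Rightarrow> bool" where
  "separation_data M Ms \<kappa> A B \<longleftrightarrow> ordered_partition M Ms \<and> \<kappa> < length Ms \<and>
     A \<noteq> {} \<and> B \<noteq> {} \<and> A \<inter> B = {} \<and> A \<union> B = Ms ! \<kappa>"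

definition split_at :: "'a set list \<Rightarrow> nat \<Rightarrow> 'a set \<Rightarrow> 'a set \<Rightarrow> 'a set list" where
  "split_at Ms \<kappa> A B = take \<kappa> Ms @ [A, B] @ drop (Suc \<kappa>) Ms"

definition separation_responsive :: "'a set \<Rightarrow> ('a rel \<Rightarrow> 'a \<Rightarrow> real) \<Rightarrow> bool" where
  "separation_responsive M \<phi> \<longleftrightarrow>
     (\<forall>Ms \<kappa> A B. separation_data M Ms \<kappa> A B \<longrightarrow>
        (let R = ord_rel Ms; R' = ord_rel (split_at Ms \<kappa> A B) in
          phi_set \<phi> R' A \<ge> phi_set \<phi> R A \<and> phi_set \<phi> R' B \<le> phi_set \<phi> R B))"

definition separation_direct :: "'a set \<Rightarrow> ('a rel \<Rightarrow> 'a \<Rightarrow> real) \<Rightarrow> bool" where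
  "separation_direct M \<phi> \<longleftrightarrow>
     (\<forall>Ms \<kappa> A B. separation_data M Ms \<kappa> A B \<longrightarrow>
        (let R = ord_rel Ms; R' = ord_rel (split_at Ms \<kappa> A B) in
          (\<exists>k<length Ms. phi_set \<phi> R (Ms ! k) \<noteq> phi_set \<phi> R' (Ms ! k)) \<longrightarrow>
          phi_set \<phi> R' A \<noteq> phi_set \<phi> R A \<and> phi_set \<phi> R' B \<noteq> phi_set \<phi> R B))"

definition separation_monotonic :: "'a set \<Rightarrow> ('a rel \<Rightarrow> 'a \<Rightarrow> real) \<Rightarrow> bool" where
  "separation_monotonic M \<phi> \<longleftrightarrow> separation_responsive M \<phi> \<and> separation_direct M \<phi>"

definition separation_upper_invariant :: "'a set \<Rightarrow> ('a rel \<Rightarrow> 'a \<Rightarrow> real) \<Rightarrow> bool" where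
  "separation_upper_invariant M \<phi> \<longleftrightarrow>
     (\<forall>Ms \<kappa> A B. separation_data M Ms \<kappa> A B \<longrightarrow>
        (\<forall>k<\<kappa>. phi_set \<phi> (ord_rel Ms) (Ms ! k) =
                 phi_set \<phi> (ord_rel (split_at Ms \<kappa> A B)) (Ms ! k)))"

definition separation_lower_invariant :: "'a set \<Rightarrow> ('a rel \<Rightarrow> 'a \<Rightarrow> real) \<Rightarrow> bool" where
  "separation_lower_invariant M \<phi> \<longleftrightarrow>
     (\<forall>Ms \<kappa> A B. separation_data M Ms \<kappa> A B \<longrightarrow>
        (\<forall>k. \<kappa> < k \<and> k < length Ms \<longrightarrow>
           phi_set \<phi> (ord_rel Ms) (Ms ! k) =
           phi_set \<phi> (ord_rel (split_at Ms \<kappa> A B)) (Ms ! k)))"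

definition multi_separation_strategyproof :: "'a set \<Rightarrow> ('a rel \<Rightarrow> 'a \<Rightarrow> real) \<Rightarrow> bool" where
  "multi_separation_strategyproof M \<phi> \<longleftrightarrow>
     (\<forall>R R'. multi_separation M R R' \<longrightarrow>
        fosd M R (\<phi> R) (\<phi> R') \<and> fosd M R' (\<phi> R') (\<phi> R))"

end

theory Submission
  imports Defs
begin

lemma set_take_img: "q \<le> length xs \<Longrightarrow> set (take q xs) = (!) xs ` {..<q}"
proof -
  assume q: "q \<le> length xs"
  have "take q xs = map ((!) xs) [0..<q]" using q by (intro nth_equalityI) auto
  then show ?thesis by (simp add: atLeast0LessThan)
qed

lemma op_subset: "ordered_partition M Ns \<Longrightarrow> i < length Ns \<Longrightarrow> Ns!i \<subseteq> M"
  unfolding ordered_partition_def by (metis Sup_upper nth_mem)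

lemma op_unique: "ordered_partition M Ns \<Longrightarrow> i < length Ns \<Longrightarrow> j < length Ns \<Longrightarrow>
   a \<in> Ns!i \<Longrightarrow> a \<in> Ns!j \<Longrightarrow> i = j"
  unfolding ordered_partition_def by blast

lemma op_ex: "ordered_partition M Ns \<Longrightarrow> a \<in> M \<Longrightarrow> \<exists>i<length Ns. a \<in> Ns!i"
  unfolding ordered_partition_def by (auto simp: in_set_conv_nth)

lemma op_weak:
  assumes op: "ordered_partition M Ns"
  shows "weak_order M (ord_rel Ns)"
  unfolding weak_order_def
proof (intro conjI)
  show "ord_rel Ns \<subseteq> M \<times> M" using op_subset[OF op] unfolding ord_rel_def by blast
  show "\<forall>a\<in>M. \<forall>b\<in>M. (a,b) \<in> ord_rel Ns \<or> (b,a) \<in> ord_rel Ns"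
  proof (intro ballI)
    fix a b assume "a\<in>M" "b\<in>M"
    then obtain i j where "i<length Ns" "a\<in>Ns!i" "j<length Ns" "b\<in>Ns!j" using op_ex[OF op] by meson
    then show "(a,b) \<in> ord_rel Ns \<or> (b,a) \<in> ord_rel Ns" unfolding ord_rel_def
      by (cases "i \<le> j") auto
  qed
  show "trans (ord_rel Ns)"
  proof (rule transI)
    fix a b c assume "(a,b) \<in> ord_rel Ns" "(b,c) \<in> ord_rel Ns"
    then obtain i j j' l where h: "i<length Ns" "j<length Ns" "j'<length Ns" "l<length Ns"
      "i \<le> j" "j' \<le> l" "a \<in> Ns!i" "b \<in> Ns!j" "b \<in> Ns!j'" "c \<in> Ns!l"
      unfolding ord_rel_def by auto
    with op_unique[OF op] have "j = j'" by blast
    then show "(a,c) \<in> ord_rel Ns" unfolding ord_rel_def using h le_trans by blast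
  qed
qed

lemma sum_take:
  assumes fin: "finite M" and op: "ordered_partition M Ns" and q: "q \<le> length Ns"
  shows "(\<Sum>j\<in>\<Union>(set (take q Ns)). f j) = (\<Sum>i<q. \<Sum>j\<in>Ns!i. f j)"
proof -
  have eq: "\<Union>(set (take q Ns)) = \<Union>((!) Ns ` {..<q})"
    using q by (simp add: set_take_img)
  have "(\<Sum>j\<in>\<Union>((!) Ns ` {..<q}). f j) = (\<Sum>i\<in>{..<q}. \<Sum>j\<in>Ns!i. f j)"
  proof (rule sum.UNION_disjoint)
    show "\<forall>i\<in>{..<q}. finite (Ns!i)" using q op_subset[OF op] fin
      by (meson finite_subset lessThan_iff order_less_le_trans)
    show "\<forall>i\<in>{..<q}. \<forall>j\<in>{..<q}. i \<noteq> j \<longrightarrow> Ns!i \<inter> Ns!j = {}"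
      using op q unfolding ordered_partition_def by auto
  qed simp
  then show ?thesis using eq by simp
qed

lemma sum_all:
  assumes fin: "finite M" and op: "ordered_partition M Ns"
  shows "(\<Sum>j\<in>M. f j) = (\<Sum>i<length Ns. \<Sum>j\<in>Ns!i. f j)"
  using sum_take[OF fin op, of "length Ns" f] op unfolding ordered_partition_def by simp

lemma upper_set:
  assumes op: "ordered_partition M Ns" and p: "p < length Ns" "a \<in> Ns!p"
  shows "{j\<in>M. (j,a)\<in>ord_rel Ns} = \<Union>(set (take (Suc p) Ns))"
proof
  show "{j\<in>M. (j,a)\<in>ord_rel Ns} \<subseteq> \<Union>(set (take (Suc p) Ns))"
  proof
    fix j assume "j \<in> {j\<in>M. (j,a)\<in>ord_rel Ns}"
    then obtain i p' where h: "i < length Ns" "p' < length Ns" "i \<le> p'" "j \<in> Ns!i" "a \<in> Ns!p'"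
      unfolding ord_rel_def by auto
    with op_unique[OF op] p have "p' = p" by blast
    with h show "j \<in> \<Union>(set (take (Suc p) Ns))"
      using set_take_img[of "Suc p" Ns] p by auto
  qed
  show "\<Union>(set (take (Suc p) Ns)) \<subseteq> {j\<in>M. (j,a)\<in>ord_rel Ns}"
  proof
    fix j assume "j \<in> \<Union>(set (take (Suc p) Ns))"
    then obtain i where h: "i < Suc p" "j \<in> Ns!i" using p by (auto simp: in_set_conv_nth)
    then have "j \<in> M" using op_subset[OF op, of i] p by auto
    then show "j \<in> {j\<in>M. (j,a)\<in>ord_rel Ns}" 
    proof -
      have "i < length Ns" "i \<le> p" using h p by auto
      then show ?thesis using \<open>j \<in> M\<close> h p unfolding ord_rel_def by blast
    qed
  qed
qed

lemma sum_others:
  fixes f g :: "nat \<Rightarrow> real"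
  assumes "(\<Sum>i<n. f i) = (\<Sum>i<n. g i)" "\<forall>i<n. i \<noteq> k \<longrightarrow> f i = g i" "k < n"
  shows "f k = g k"
proof -
  have "(\<Sum>i<n. f i) = f k + (\<Sum>i\<in>{..<n}-{k}. f i)" using assms(3) by (simp add: sum.remove)
  moreover have "(\<Sum>i<n. g i) = g k + (\<Sum>i\<in>{..<n}-{k}. g i)" using assms(3) by (simp add: sum.remove)
  moreover have "(\<Sum>i\<in>{..<n}-{k}. f i) = (\<Sum>i\<in>{..<n}-{k}. g i)" using assms(2) by (intro sum.cong) auto
  ultimately show ?thesis using assms(1) by simp
qed

lemma len_concat_ge: "\<forall>x\<in>set Ls. length x \<ge> 1 \<Longrightarrow> length (concat Ls) \<ge> length Ls"
  by (induction Ls) auto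

lemma len_concat_gt: "\<forall>x\<in>set Ls. length x \<ge> 1 \<Longrightarrow> \<exists>x\<in>set Ls. length x \<ge> 2 \<Longrightarrow> length (concat Ls) > length Ls"
proof (induction Ls)
  case (Cons x Ls)
  then show ?case using len_concat_ge[of Ls] by (cases "length x \<ge> 2") auto
qed simp

lemma nth_spl:
  assumes "k < length xs" "j < Suc (length xs)"
  shows "(take k xs @ a # b # drop (Suc k) xs) ! j =
     (if j<k then xs!j else if j=k then a else if j = Suc k then b else xs!(j-1))"
proof -
  have lt: "length (take k xs) = k" using assms by simp
  consider "j < k" | "j = k" | "j = Suc k" | "j > Suc k" by linarith
  then show ?thesis
  proof cases
    case 1 then show ?thesis using lt by (simp add: nth_append)
  next
    case 2 then show ?thesis using lt by (simp add: nth_append)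
  next
    case 3 then show ?thesis using lt by (simp add: nth_append)
  next
    case 4
    define m where "m = j - 2"
    have m: "j = Suc (Suc m)" "k \<le> m" using 4 unfolding m_def by arith+
    have "(take k xs @ a # b # drop (Suc k) xs) ! j = ([a,b] @ drop (Suc k) xs) ! (j - k)"
      using lt 4 by (simp add: nth_append)
    also have "\<dots> = drop (Suc k) xs ! (m - k)" using m by (simp add: Suc_diff_le)
    also have "\<dots> = xs ! (j - 1)" using m assms by simp
    finally show ?thesis using 4 by simp
  qed
qed

lemma len_spl: "k < length xs \<Longrightarrow> length (take k xs @ [a,b] @ drop (Suc k) xs) = Suc (length xs)"
  by simp

lemma op_append:
  assumes op: "ordered_partition P (xs@ys)"
  shows "ordered_partition (\<Union>(set xs)) xs" "ordered_partition (\<Union>(set ys)) ys"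
    "\<Union>(set xs) \<inter> \<Union>(set ys) = {}" "\<Union>(set xs) \<union> \<Union>(set ys) = P"
proof -
  have ne: "\<And>i. i < length (xs@ys) \<Longrightarrow> (xs@ys)!i \<noteq> {}"
    and dj: "\<And>i j. i < length (xs@ys) \<Longrightarrow> j < length (xs@ys) \<Longrightarrow> i \<noteq> j \<Longrightarrow> (xs@ys)!i \<inter> (xs@ys)!j = {}"
    and un: "\<Union>(set (xs@ys)) = P"
    using op unfolding ordered_partition_def by auto
  show "ordered_partition (\<Union>(set xs)) xs" unfolding ordered_partition_def
  proof (intro conjI allI impI)
    fix k assume "k < length xs" then show "xs!k \<noteq> {}" using ne[of k] by (simp add: nth_append)
  next
    fix i j assume "i < length xs" "j < length xs" "i \<noteq> j"
    then show "xs!i \<inter> xs!j = {}" using dj[of i j] by (simp add: nth_append)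
  qed simp
  show "ordered_partition (\<Union>(set ys)) ys" unfolding ordered_partition_def
  proof (intro conjI allI impI)
    fix k assume "k < length ys" then show "ys!k \<noteq> {}" using ne[of "length xs + k"] by (simp add: nth_append)
  next
    fix i j assume "i < length ys" "j < length ys" "i \<noteq> j"
    then show "ys!i \<inter> ys!j = {}" using dj[of "length xs + i" "length xs + j"] by (simp add: nth_append)
  qed simp
  show "\<Union>(set xs) \<inter> \<Union>(set ys) = {}"
  proof (rule ccontr)
    assume "\<Union>(set xs) \<inter> \<Union>(set ys) \<noteq> {}"
    then obtain x i j where h: "i < length xs" "j < length ys" "x \<in> xs!i" "x \<in> ys!j"
      by (auto simp: in_set_conv_nth)
    then show False using dj[of i "length xs + j"] by (auto simp: nth_append)
  qed
  show "\<Union>(set xs) \<union> \<Union>(set ys) = P" using un by simp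
qed

lemma op_split:
  assumes op: "ordered_partition M Ms" and k: "k < length Ms" and A: "A \<noteq> {}" and B: "B \<noteq> {}"
    and AB: "A \<inter> B = {}" "A \<union> B = Ms!k"
  shows "ordered_partition M (take k Ms @ [A,B] @ drop (Suc k) Ms)"
proof -
  let ?S = "take k Ms @ [A,B] @ drop (Suc k) Ms"
  have ne: "\<And>i. i < length Ms \<Longrightarrow> Ms!i \<noteq> {}"
    and dj: "\<And>i j. i < length Ms \<Longrightarrow> j < length Ms \<Longrightarrow> i \<noteq> j \<Longrightarrow> Ms!i \<inter> Ms!j = {}"
    and un: "\<Union>(set Ms) = M"
    using op unfolding ordered_partition_def by auto
  define g where "g j = (if j \<le> k then j else j - 1)" for j :: nat
  have sub: "\<And>j. j < Suc (length Ms) \<Longrightarrow> ?S!j \<subseteq> Ms!(g j) \<and> g j < length Ms"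
    using AB k by (auto simp: nth_spl g_def)
  have "\<Union>(set ?S) = \<Union>(set (take k Ms @ [Ms!k] @ drop (Suc k) Ms))" using AB by auto
  also have "take k Ms @ [Ms!k] @ drop (Suc k) Ms = Ms" using k id_take_nth_drop[of k Ms] by simp
  finally have un2: "\<Union>(set ?S) = M" using un by simp
  show ?thesis unfolding ordered_partition_def
  proof (intro conjI allI impI)
    fix i assume "i < length ?S"
    then show "?S!i \<noteq> {}" using k A B ne by (auto simp: nth_spl)
  next
    fix i j assume ij: "i < length ?S" "j < length ?S" "i \<noteq> j"
    show "?S!i \<inter> ?S!j = {}"
    proof (cases "g i = g j")
      case False
      have "i < Suc (length Ms)" "j < Suc (length Ms)" using ij k by auto
      then have "?S!i \<subseteq> Ms!(g i)" "?S!j \<subseteq> Ms!(g j)" "g i < length Ms" "g j < length Ms"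
        using sub by blast+
      then show ?thesis using dj[of "g i" "g j"] False by blast
    next
      case True
      then have "{i,j} = {k, Suc k}" using ij unfolding g_def by (auto split: if_splits)
      then have "(i = k \<and> j = Suc k) \<or> (i = Suc k \<and> j = k)" by (auto simp: doubleton_eq_iff)
      then show ?thesis using AB k by (auto simp: nth_spl)
    qed
  qed (use un2 in simp)
qed

lemma refine:
  assumes op: "ordered_partition M Ms" and len: "length Ls = length Ms"
    and sub: "\<forall>k<length Ms. ordered_partition (Ms!k) (Ls!k)"
    and k: "k < length Ms" and eq: "Ls!k = xs @ ys" and ne: "xs \<noteq> []" "ys \<noteq> []"
  shows "separation_data M Ms k (\<Union>(set xs)) (\<Union>(set ys))"
    and "ordered_partition M (split_at Ms k (\<Union>(set xs)) (\<Union>(set ys)))"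
    and "length (take k Ls @ [xs,ys] @ drop (Suc k) Ls) = length (split_at Ms k (\<Union>(set xs)) (\<Union>(set ys)))"
    and "\<forall>j<length (split_at Ms k (\<Union>(set xs)) (\<Union>(set ys))).
           ordered_partition (split_at Ms k (\<Union>(set xs)) (\<Union>(set ys)) ! j)
             ((take k Ls @ [xs,ys] @ drop (Suc k) Ls) ! j)"
    and "concat (take k Ls @ [xs,ys] @ drop (Suc k) Ls) = concat Ls"
    and "split_at Ms k (\<Union>(set xs)) (\<Union>(set ys)) ! k = \<Union>(set xs)"
    and "split_at Ms k (\<Union>(set xs)) (\<Union>(set ys)) ! Suc k = \<Union>(set ys)"
    and "length (split_at Ms k (\<Union>(set xs)) (\<Union>(set ys))) = Suc (length Ms)"
    and "\<And>j. j < k \<Longrightarrow> split_at Ms k (\<Union>(set xs)) (\<Union>(set ys)) ! j = Ms ! j"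
    and "\<And>j. k < j \<Longrightarrow> j < length Ms \<Longrightarrow> split_at Ms k (\<Union>(set xs)) (\<Union>(set ys)) ! Suc j = Ms ! j"
proof -
  let ?A = "\<Union>(set xs)" and ?B = "\<Union>(set ys)"
  have opk: "ordered_partition (Ms!k) (xs@ys)" using sub k eq by metis
  note oa = op_append[OF opk]
  have nx: "xs!0 \<noteq> {}" using opk ne unfolding ordered_partition_def by (auto simp: nth_append)
  have ny: "ys!0 \<noteq> {}" using opk ne unfolding ordered_partition_def
    by (auto simp: nth_append dest: spec[of _ "length xs"])
  have A: "?A \<noteq> {}" using nx ne by (metis Union_empty_conv length_greater_0_conv nth_mem)
  have B: "?B \<noteq> {}" using ny ne by (metis Union_empty_conv length_greater_0_conv nth_mem)
  show sd: "separation_data M Ms k ?A ?B" unfolding separation_data_def using op k A B oa by auto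
  show "ordered_partition M (split_at Ms k ?A ?B)" unfolding split_at_def
    using op_split[OF op k A B oa(3) oa(4)] .
  show "length (take k Ls @ [xs,ys] @ drop (Suc k) Ls) = length (split_at Ms k ?A ?B)"
    using len k unfolding split_at_def by simp
  show "split_at Ms k ?A ?B ! k = ?A" "split_at Ms k ?A ?B ! Suc k = ?B"
    "length (split_at Ms k ?A ?B) = Suc (length Ms)"
    using k unfolding split_at_def by (simp_all add: nth_append)
  show "\<And>j. j < k \<Longrightarrow> split_at Ms k ?A ?B ! j = Ms ! j"
    using k unfolding split_at_def by (simp add: nth_append)
  show "\<And>j. k < j \<Longrightarrow> j < length Ms \<Longrightarrow> split_at Ms k ?A ?B ! Suc j = Ms ! j"
    using k unfolding split_at_def by (simp add: nth_spl)
  show "\<forall>j<length (split_at Ms k ?A ?B).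
           ordered_partition (split_at Ms k ?A ?B ! j) ((take k Ls @ [xs,ys] @ drop (Suc k) Ls) ! j)"
  proof (intro allI impI)
    fix j assume j: "j < length (split_at Ms k ?A ?B)"
    then have j': "j < Suc (length Ms)" using k unfolding split_at_def by simp
    have kL: "k < length Ls" using k len by simp
    consider "j < k" | "j = k" | "j = Suc k" | "j > Suc k" by linarith
    then show "ordered_partition (split_at Ms k ?A ?B ! j) ((take k Ls @ [xs,ys] @ drop (Suc k) Ls) ! j)"
    proof cases
      case 1 then show ?thesis using sub k kL j' unfolding split_at_def by (simp add: nth_spl)
    next
      case 2 then show ?thesis using oa k kL j' unfolding split_at_def by (simp add: nth_spl)
    next
      case 3 then show ?thesis using oa k kL j' unfolding split_at_def by (simp add: nth_spl)
    next
      case 4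
      have "j - 1 < length Ms" using 4 j' by simp
      then show ?thesis using sub 4 k kL j' len unfolding split_at_def by (simp add: nth_spl)
    qed
  qed
  have "concat (take k Ls @ [xs,ys] @ drop (Suc k) Ls) = concat (take k Ls @ [Ls!k] @ drop (Suc k) Ls)"
    using eq by simp
  also have "take k Ls @ [Ls!k] @ drop (Suc k) Ls = Ls" using k len id_take_nth_drop[of k Ls] by simp
  finally show "concat (take k Ls @ [xs,ys] @ drop (Suc k) Ls) = concat Ls" .
qed

lemma lottery_sum:
  assumes fin: "finite M" and lot: "\<forall>R. weak_order M R \<longrightarrow> lottery M (\<phi> R)"
    and op: "ordered_partition M Ns"
  shows "(\<Sum>i<length Ns. phi_set \<phi> (ord_rel Ns) (Ns!i)) = 1"
proof -
  have "lottery M (\<phi> (ord_rel Ns))" using lot op_weak[OF op] by blast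
  then have "(\<Sum>a\<in>M. \<phi> (ord_rel Ns) a) = 1" unfolding lottery_def by blast
  then show ?thesis using sum_all[OF fin op, of "\<phi> (ord_rel Ns)"] unfolding phi_set_def by simp
qed

lemma main:
  assumes fin: "finite M" and lot: "\<forall>R. weak_order M R \<longrightarrow> lottery M (\<phi> R)"
    and ui: "separation_upper_invariant M \<phi>" and li: "separation_lower_invariant M \<phi>"
  shows "ordered_partition M Ms \<Longrightarrow> length Ls = length Ms \<Longrightarrow>
    \<forall>k<length Ms. ordered_partition (Ms!k) (Ls!k) \<Longrightarrow>
    ordered_partition M (concat Ls) \<and>
    (\<forall>k<length Ms. phi_set \<phi> (ord_rel (concat Ls)) (Ms!k) = phi_set \<phi> (ord_rel Ms) (Ms!k))"
proof (induction "length (concat Ls) - length Ms" arbitrary: Ms Ls rule: less_induct)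
  case less
  note op = less.prems(1) and len = less.prems(2) and sub = less.prems(3)
  have Lne: "\<forall>k<length Ms. Ls!k \<noteq> []"
  proof (intro allI impI)
    fix k assume k: "k < length Ms"
    then have "Ms!k \<noteq> {}" using op unfolding ordered_partition_def by blast
    then show "Ls!k \<noteq> []" using sub k unfolding ordered_partition_def by force
  qed
  show ?case
  proof (cases "\<exists>k<length Ms. length (Ls!k) \<ge> 2")
    case False
    have "Ls = map (\<lambda>X. [X]) Ms"
    proof (rule nth_equalityI)
      show "length Ls = length (map (\<lambda>X. [X]) Ms)" using len by simp
      fix k assume "k < length Ls"
      then have k: "k < length Ms" using len by simp
      then have "length (Ls!k) \<noteq> 0" "\<not> 2 \<le> length (Ls!k)" using False Lne by auto
      then have "length (Ls!k) = 1" by arith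
      then obtain X where X: "Ls!k = [X]" by (metis One_nat_def length_0_conv length_Suc_conv)
      then have "X = Ms!k" using sub k unfolding ordered_partition_def by auto
      then show "Ls!k = map (\<lambda>X. [X]) Ms ! k" using X k by simp
    qed
    then have "concat Ls = Ms" by (simp add: concat_map_singleton)
    then show ?thesis using op by simp
  next
    case True
    then obtain k where k: "k < length Ms" "length (Ls!k) \<ge> 2" by blast
    define xs ys where "xs = [hd (Ls!k)]" and "ys = tl (Ls!k)"
    have "Ls!k \<noteq> []" using Lne k by blast
    then have eq: "Ls!k = xs @ ys" unfolding xs_def ys_def by simp
    have ne: "xs \<noteq> []" "ys \<noteq> []" using k unfolding xs_def ys_def
      by (auto simp: length_tl dest: arg_cong[of _ _ length])
    note R = refine[OF op len sub k(1) eq ne]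
    define A B where "A = \<Union>(set xs)" and "B = \<Union>(set ys)"
    define Ms' where "Ms' = split_at Ms k A B"
    define Ls' where "Ls' = take k Ls @ [xs,ys] @ drop (Suc k) Ls"
    have gt: "length (concat Ls) > length Ls"
    proof (rule len_concat_gt)
      show "\<forall>x\<in>set Ls. 1 \<le> length x"
      proof
        fix x assume "x \<in> set Ls"
        then obtain i where "i < length Ls" "x = Ls!i" by (auto simp: in_set_conv_nth)
        then show "1 \<le> length x" using Lne len by (simp add: Suc_leI)
      qed
      have "Ls!k \<in> set Ls" using k len by simp
      then show "\<exists>x\<in>set Ls. 2 \<le> length x" using k by blast
    qed
    have "length (concat Ls') - length Ms' < length (concat Ls) - length Ms"
      using R(5,8) gt len unfolding Ls'_def Ms'_def A_def B_def by simp
    moreover have "ordered_partition M Ms'" "length Ls' = length Ms'"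
      "\<forall>j<length Ms'. ordered_partition (Ms'!j) (Ls'!j)"
      using R(2,3,4) unfolding Ms'_def Ls'_def A_def B_def by auto
    ultimately have H: "ordered_partition M (concat Ls') \<and>
      (\<forall>j<length Ms'. phi_set \<phi> (ord_rel (concat Ls')) (Ms'!j) = phi_set \<phi> (ord_rel Ms') (Ms'!j))"
      using less.hyps by blast
    have cc: "concat Ls' = concat Ls" using R(5) unfolding Ls'_def .
    have IH1: "ordered_partition M (concat Ls)"
      and IH: "\<forall>j<length Ms'. phi_set \<phi> (ord_rel (concat Ls)) (Ms'!j) = phi_set \<phi> (ord_rel Ms') (Ms'!j)"
      using H unfolding cc by auto
    have lenM': "length Ms' = Suc (length Ms)" using R(8) unfolding Ms'_def A_def B_def .
    have sdat: "separation_data M Ms k A B" using R(1) unfolding A_def B_def .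
    have up: "\<forall>j<k. phi_set \<phi> (ord_rel Ms) (Ms!j) = phi_set \<phi> (ord_rel Ms') (Ms!j)"
      using ui sdat unfolding separation_upper_invariant_def Ms'_def by blast
    have lo: "\<forall>j. k < j \<and> j < length Ms \<longrightarrow> phi_set \<phi> (ord_rel Ms) (Ms!j) = phi_set \<phi> (ord_rel Ms') (Ms!j)"
      using li sdat unfolding separation_lower_invariant_def Ms'_def by blast
    have others: "\<forall>j<length Ms. j \<noteq> k \<longrightarrow>
        phi_set \<phi> (ord_rel (concat Ls)) (Ms!j) = phi_set \<phi> (ord_rel Ms) (Ms!j) \<and>
        phi_set \<phi> (ord_rel Ms') (Ms!j) = phi_set \<phi> (ord_rel Ms) (Ms!j)"
    proof (intro allI impI)
      fix j assume j: "j < length Ms" "j \<noteq> k"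
      show "phi_set \<phi> (ord_rel (concat Ls)) (Ms!j) = phi_set \<phi> (ord_rel Ms) (Ms!j) \<and>
        phi_set \<phi> (ord_rel Ms') (Ms!j) = phi_set \<phi> (ord_rel Ms) (Ms!j)"
      proof (cases "j < k")
        case True
        have "Ms'!j = Ms!j" using R(9)[OF True] unfolding Ms'_def A_def B_def .
        then show ?thesis using IH[rule_format, of j] up True lenM' j by auto
      next
        case False
        then have "k < j" using j by simp
        have "Ms'!Suc j = Ms!j" using R(10)[OF \<open>k < j\<close> j(1)] unfolding Ms'_def A_def B_def .
        then show ?thesis using IH[rule_format, of "Suc j"] lo \<open>k < j\<close> lenM' j by auto
      qed
    qed
    have s1: "(\<Sum>i<length Ms. phi_set \<phi> (ord_rel Ms) (Ms!i)) = 1"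
      using lottery_sum[OF fin lot op] .
    have s2: "(\<Sum>i<length Ms. phi_set \<phi> (ord_rel Ms') (Ms!i)) = 1"
    proof -
      have opM': "ordered_partition M Ms'" using R(2) unfolding Ms'_def A_def B_def .
      have "lottery M (\<phi> (ord_rel Ms'))" using lot op_weak[OF opM'] by blast
      then have "(\<Sum>a\<in>M. \<phi> (ord_rel Ms') a) = 1" unfolding lottery_def by blast
      then show ?thesis using sum_all[OF fin op, of "\<phi> (ord_rel Ms')"] unfolding phi_set_def by simp
    qed
    have kk: "phi_set \<phi> (ord_rel Ms') (Ms!k) = phi_set \<phi> (ord_rel Ms) (Ms!k)"
      by (rule sum_others[where n = "length Ms"]) (use s1 s2 others k in auto)
    have ABk: "Ms!k = A \<union> B" "A \<inter> B = {}" using sdat unfolding separation_data_def by auto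
    have "Ms!k \<subseteq> M" using op_subset[OF op k(1)] .
    then have finAB: "finite A" "finite B" using ABk fin finite_subset by auto
    have split_sum: "\<And>X. phi_set \<phi> X (Ms!k) = phi_set \<phi> X A + phi_set \<phi> X B"
      unfolding phi_set_def using ABk finAB by (simp add: sum.union_disjoint)
    have MA: "Ms'!k = A" "Ms'!Suc k = B" using R(6,7) unfolding Ms'_def A_def B_def by auto
    have kl: "k < length Ms'" "Suc k < length Ms'" using lenM' k by auto
    have eA: "phi_set \<phi> (ord_rel (concat Ls)) A = phi_set \<phi> (ord_rel Ms') A"
      using IH[rule_format, OF kl(1)] MA by simp
    have eB: "phi_set \<phi> (ord_rel (concat Ls)) B = phi_set \<phi> (ord_rel Ms') B"
      using IH[rule_format, OF kl(2)] MA by simp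
    have ek: "phi_set \<phi> (ord_rel (concat Ls)) (Ms!k) = phi_set \<phi> (ord_rel Ms) (Ms!k)"
      using split_sum[of "ord_rel (concat Ls)"] split_sum[of "ord_rel Ms'"] kk eA eB by simp
    have "\<forall>j<length Ms. phi_set \<phi> (ord_rel (concat Ls)) (Ms!j) = phi_set \<phi> (ord_rel Ms) (Ms!j)"
    proof (intro allI impI)
      fix j assume "j < length Ms"
      then show "phi_set \<phi> (ord_rel (concat Ls)) (Ms!j) = phi_set \<phi> (ord_rel Ms) (Ms!j)"
        using others ek by (cases "j = k") auto
    qed
    then show ?thesis using IH1 by blast
  qed
qed

lemma prefix_mono:
  assumes fin: "finite M" and lot: "\<forall>R. weak_order M R \<longrightarrow> lottery M (\<phi> R)"
    and sr: "separation_responsive M \<phi>"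
    and ui: "separation_upper_invariant M \<phi>" and li: "separation_lower_invariant M \<phi>"
    and op: "ordered_partition M Ms" and len: "length Ls = length Ms"
    and sub: "\<forall>k<length Ms. ordered_partition (Ms!k) (Ls!k)"
    and k: "k < length Ms" and i: "i < length (Ls!k)"
  shows "phi_set \<phi> (ord_rel (concat Ls)) (\<Union>(set (take (Suc i) (Ls!k))))
         \<ge> phi_set \<phi> (ord_rel Ms) (\<Union>(set (take (Suc i) (Ls!k))))"
proof (cases "Suc i = length (Ls!k)")
  case True
  then have "\<Union>(set (take (Suc i) (Ls!k))) = Ms!k" using sub k unfolding ordered_partition_def by simp
  then show ?thesis using main[OF fin lot ui li op len sub] k by simp
next
  case False
  define xs ys where "xs = take (Suc i) (Ls!k)" and "ys = drop (Suc i) (Ls!k)"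
  have eq: "Ls!k = xs @ ys" unfolding xs_def ys_def by simp
  have ne: "xs \<noteq> []" "ys \<noteq> []" using False i unfolding xs_def ys_def by auto
  note R = refine[OF op len sub k eq ne]
  define A B where "A = \<Union>(set xs)" and "B = \<Union>(set ys)"
  define Ms' where "Ms' = split_at Ms k A B"
  define Ls' where "Ls' = take k Ls @ [xs,ys] @ drop (Suc k) Ls"
  have "ordered_partition M Ms'" "length Ls' = length Ms'"
      "\<forall>j<length Ms'. ordered_partition (Ms'!j) (Ls'!j)"
      using R(2,3,4) unfolding Ms'_def Ls'_def A_def B_def by auto
  note H = main[OF fin lot ui li this]
  have cc: "concat Ls' = concat Ls" using R(5) unfolding Ls'_def .
  have MA: "Ms'!k = A" using R(6) unfolding Ms'_def A_def B_def by auto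
  have kl: "k < length Ms'" using R(8) k unfolding Ms'_def A_def B_def by auto
  have e1: "phi_set \<phi> (ord_rel (concat Ls)) A = phi_set \<phi> (ord_rel Ms') A"
    using H kl MA cc by auto
  have sdat: "separation_data M Ms k A B" using R(1) unfolding A_def B_def .
  have "phi_set \<phi> (ord_rel Ms') A \<ge> phi_set \<phi> (ord_rel Ms) A"
    using sr sdat unfolding separation_responsive_def Let_def Ms'_def by blast
  then show ?thesis using e1 unfolding A_def xs_def by simp
qed

theorem lemma6:
  fixes M :: "'a set" and \<phi> :: "'a rel \<Rightarrow> 'a \<Rightarrow> real"
  assumes "finite M"
    and "\<forall>R. weak_order M R \<longrightarrow> lottery M (\<phi> R)"
    and "separation_monotonic M \<phi>"
    and "separation_upper_invariant M \<phi>"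
    and "separation_lower_invariant M \<phi>"
  shows "multi_separation_strategyproof M \<phi>"

proof -
  note fin = assms(1) and lot = assms(2)
  have sr: "separation_responsive M \<phi>" using assms(3) unfolding separation_monotonic_def by blast
  show ?thesis
  unfolding multi_separation_strategyproof_def
  proof (intro allI impI)
    fix R R' assume "multi_separation M R R'"
    then obtain Ms Ls where op: "ordered_partition M Ms" and R: "R = ord_rel Ms"
      and len: "length Ls = length Ms"
      and sub: "\<forall>k<length Ms. ordered_partition (Ms!k) (Ls!k)" and R': "R' = ord_rel (concat Ls)"
      unfolding multi_separation_def by blast
    note mn = main[OF assms(1,2,4,5) op len sub]
    have opQ: "ordered_partition M (concat Ls)"
      and cls: "\<forall>k<length Ms. phi_set \<phi> R' (Ms!k) = phi_set \<phi> R (Ms!k)"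
      using mn R R' by auto
    have pre: "(\<Sum>a\<in>\<Union>(set (take j Ms)). \<phi> R' a) = (\<Sum>a\<in>\<Union>(set (take j Ms)). \<phi> R a)"
      if j: "j \<le> length Ms" for j
    proof -
      have "(\<Sum>a\<in>\<Union>(set (take j Ms)). \<phi> R' a) = (\<Sum>i<j. \<Sum>a\<in>Ms!i. \<phi> R' a)"
        using sum_take[OF fin op j] .
      also have "\<dots> = (\<Sum>i<j. \<Sum>a\<in>Ms!i. \<phi> R a)"
      proof (rule sum.cong)
        fix i assume "i \<in> {..<j}"
        then have "i < length Ms" using j by simp
        then show "(\<Sum>a\<in>Ms!i. \<phi> R' a) = (\<Sum>a\<in>Ms!i. \<phi> R a)"
          using cls[rule_format, of i] unfolding phi_set_def by simp
      qed (rule refl)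
      also have "\<dots> = (\<Sum>a\<in>\<Union>(set (take j Ms)). \<phi> R a)"
        using sum_take[OF fin op j, of "\<phi> R"] by simp
      finally show ?thesis .
    qed
    show "fosd M R (\<phi> R) (\<phi> R') \<and> fosd M R' (\<phi> R') (\<phi> R)"
    proof
      show "fosd M R (\<phi> R) (\<phi> R')" unfolding fosd_def
      proof
        fix a assume "a \<in> M"
        then obtain p where p: "p < length Ms" "a \<in> Ms!p" using op_ex[OF op] by blast
        have "{j\<in>M. (j,a)\<in>R} = \<Union>(set (take (Suc p) Ms))" using upper_set[OF op p] R by simp
        then show "(\<Sum>j\<in>{j\<in>M. (j,a)\<in>R}. \<phi> R' j) \<le> (\<Sum>j\<in>{j\<in>M. (j,a)\<in>R}. \<phi> R j)"
          using pre[of "Suc p"] p by simp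
      qed
      show "fosd M R' (\<phi> R') (\<phi> R)" unfolding fosd_def
      proof
        fix a assume "a \<in> M"
        then obtain k where k: "k < length Ms" "a \<in> Ms!k" using op_ex[OF op] by blast
        have kL: "k < length Ls" using k len by simp
        have opk: "ordered_partition (Ms!k) (Ls!k)" using sub k by blast
        obtain i where i: "i < length (Ls!k)" "a \<in> Ls!k!i" using op_ex[OF opk k(2)] by blast
        define p where "p = length (concat (take k Ls)) + i"
        have "take k Ls @ [Ls!k] @ drop (Suc k) Ls = Ls" using kL id_take_nth_drop[of k Ls] by simp
        then have "concat Ls = concat (take k Ls @ [Ls!k] @ drop (Suc k) Ls)" by simp
        then have Q: "concat Ls = concat (take k Ls) @ Ls!k @ concat (drop (Suc k) Ls)"
          by simp
        have pl: "p < length (concat Ls)" unfolding p_def using Q i by (simp add: Q)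
        have pn: "concat Ls ! p = Ls!k!i" unfolding p_def using Q i by (simp add: nth_append)
        have up: "{j\<in>M. (j,a)\<in>R'} = \<Union>(set (take (Suc p) (concat Ls)))"
          using upper_set[OF opQ pl] pn i R' by simp
        have tk: "take (Suc p) (concat Ls) = concat (take k Ls) @ take (Suc i) (Ls!k)"
          unfolding p_def by (subst Q) (simp add: Suc_le_eq i)
        define U where "U = \<Union>(set (take (Suc i) (Ls!k)))"
        define V where "V = \<Union>(set (take k Ms))"
        have sLs: "set (take k Ls) = (!) Ls ` {..<k}" using kL by (simp add: set_take_img)
        have sMs: "set (take k Ms) = (!) Ms ` {..<k}" using k by (simp add: set_take_img)
        have "\<Union>(set (concat (take k Ls))) = (\<Union>j<k. \<Union>(set (Ls!j)))" using sLs by auto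
        also have "\<dots> = (\<Union>j<k. Ms!j)"
        proof (rule SUP_cong)
          fix j assume "j \<in> {..<k}"
          then have "j < length Ms" using k by simp
          then show "\<Union>(set (Ls!j)) = Ms!j" using sub unfolding ordered_partition_def by blast
        qed simp
        also have "\<dots> = V" unfolding V_def using sMs by simp
        finally have cV: "\<Union>(set (concat (take k Ls))) = V" .
        have upUV: "{j\<in>M. (j,a)\<in>R'} = V \<union> U" using up tk cV unfolding U_def by simp
        have "\<Union>(set (take (Suc i) (Ls!k))) \<subseteq> \<Union>(set (Ls!k))" using set_take_subset by (rule Union_mono)
        then have Usub: "U \<subseteq> Ms!k" using opk unfolding U_def ordered_partition_def by simp
        have VUd: "V \<inter> U = {}"
        proof -
          have "Ms!j \<inter> Ms!k = {}" if "j < k" for j using op k that unfolding ordered_partition_def by auto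
          then show ?thesis using Usub sMs unfolding V_def by auto
        qed
        have kM: "Ms!k \<subseteq> M" using op_subset[OF op k(1)] .
        have "\<Union>(set (take k Ms)) \<subseteq> \<Union>(set Ms)" using set_take_subset by (rule Union_mono)
        then have Vsub: "V \<subseteq> M" using op unfolding V_def ordered_partition_def by simp
        have "U \<subseteq> M" using Usub kM by blast
        then have finU1: "finite U" using fin by (rule finite_subset)
        have finV: "finite V" using Vsub fin by (rule finite_subset)
        have "phi_set \<phi> R' U \<ge> phi_set \<phi> R U"
          using prefix_mono[OF fin lot sr assms(4,5) op len sub k(1) i(1)] R R' unfolding U_def by simp
        then have "(\<Sum>j\<in>U. \<phi> R j) \<le> (\<Sum>j\<in>U. \<phi> R' j)" unfolding phi_set_def .
        moreover have "(\<Sum>j\<in>V. \<phi> R j) = (\<Sum>j\<in>V. \<phi> R' j)" using pre[of k] k unfolding V_def by simp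
        ultimately show "(\<Sum>j\<in>{j\<in>M. (j,a)\<in>R'}. \<phi> R j) \<le> (\<Sum>j\<in>{j\<in>M. (j,a)\<in>R'}. \<phi> R' j)"
          unfolding upUV using finU1 finV VUd by (simp add: sum.union_disjoint)
      qed
    qed
  qed
qed

end
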